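(* Let $N=(V,E)$ be a tree-child phylogenetic network such that no two parents of a hybrid node are connected by a path. For all nodes $u,v\in V$ with $C(u)\neq C(v)$, the following are equivalent: (i) there is a non-trivial path $u\rightsquigarrow v$; (ii) $C(v)\subsetneq C(u)$.
   Context: A DAG is labeled in a finite set $S$ if its leaves (out-degree 0) are bijectively labeled by $S$. A tree node has in-degree at most 1; a hybrid node has in-degree greater than 1; a tree child of a node is a child that is a tree node. A tree-child phylogenetic network is a rooted DAG labeled in $S$ in which every non-leaf node has at least one tree child, no tree node has out-degree 1, and every hybrid node has out-degree exactly 1. The condition that no two parents of a hybrid node are connected by a path means: if $u_1,u_2$ are the parents of a hybrid node, there is no path $u_1\rightsquigarrow u_2$ nor $u_2\rightsquigarrow u_1$. A path is non-trivial if it has length at least 1. $C(u)$ is the set of leaves that are descendants of $u$. *)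

theory Defs
  imports Main
begin

text \<open>A directed graph is a vertex set V with an edge relation E \<subseteq> V \<times> V.
  A path u \<leadsto> v is (u,v) in rtrancl E; a non-trivial path (length at least 1) is (u,v) in trancl E.\<close>

definition indeg :: "('a \<times> 'a) set \<Rightarrow> 'a \<Rightarrow> nat" where
  "indeg E v = card {u. (u, v) \<in> E}"

definition outdeg :: "('a \<times> 'a) set \<Rightarrow> 'a \<Rightarrow> nat" where
  "outdeg E v = card {w. (v, w) \<in> E}"

definition dag :: "'a set \<Rightarrow> ('a \<times> 'a) set \<Rightarrow> bool" where
  "dag V E \<longleftrightarrow> finite V \<and> E \<subseteq> V \<times> V \<and> acyclic E"

definition rooted :: "'a set \<Rightarrow> ('a \<times> 'a) set \<Rightarrow> bool" where
  "rooted V E \<longleftrightarrow> (\<exists>r\<in>V. indeg E r = 0 \<and> (\<forall>v\<in>V. (r, v) \<in> E\<^sup>*))"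

definition leaves :: "'a set \<Rightarrow> ('a \<times> 'a) set \<Rightarrow> 'a set" where
  "leaves V E = {v \<in> V. outdeg E v = 0}"

definition labeled_in :: "'a set \<Rightarrow> ('a \<times> 'a) set \<Rightarrow> 'b set \<Rightarrow> bool" where
  "labeled_in V E S \<longleftrightarrow> (\<exists>lab. bij_betw lab (leaves V E) S)"

definition tree_node :: "('a \<times> 'a) set \<Rightarrow> 'a \<Rightarrow> bool" where
  "tree_node E v \<longleftrightarrow> indeg E v \<le> 1"

definition hybrid_node :: "('a \<times> 'a) set \<Rightarrow> 'a \<Rightarrow> bool" where
  "hybrid_node E v \<longleftrightarrow> indeg E v > 1"

definition tree_child_network :: "'a set \<Rightarrow> ('a \<times> 'a) set \<Rightarrow> 'b set \<Rightarrow> bool" where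
  "tree_child_network V E S \<longleftrightarrow>
     dag V E \<and> rooted V E \<and> labeled_in V E S \<and>
     (\<forall>v\<in>V. v \<notin> leaves V E \<longrightarrow> (\<exists>w. (v, w) \<in> E \<and> tree_node E w)) \<and>
     (\<forall>v\<in>V. tree_node E v \<longrightarrow> outdeg E v \<noteq> 1) \<and>
     (\<forall>v\<in>V. hybrid_node E v \<longrightarrow> outdeg E v = 1)"

definition no_parents_path :: "'a set \<Rightarrow> ('a \<times> 'a) set \<Rightarrow> bool" where
  "no_parents_path V E \<longleftrightarrow>
     (\<forall>h\<in>V. hybrid_node E h \<longrightarrow>
        (\<forall>u1 u2. (u1, h) \<in> E \<and> (u2, h) \<in> E \<and> u1 \<noteq> u2 \<longrightarrow> (u1, u2) \<notin> E\<^sup>*))"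

definition C :: "'a set \<Rightarrow> ('a \<times> 'a) set \<Rightarrow> 'a \<Rightarrow> 'a set" where
  "C V E u = {x \<in> leaves V E. (u, x) \<in> E\<^sup>*}"

end

theory Submission
  imports Defs
begin

lemma tree_leaf:
  assumes tc: "tree_child_network V E S" and v: "v \<in> V"
  shows "\<exists>l\<in>leaves V E. (v, l) \<in> {(x,y). (x,y)\<in>E \<and> tree_node E y}\<^sup>*"
proof -
  have d: "finite V" "E \<subseteq> V \<times> V" "acyclic E" using tc by (auto simp: tree_child_network_def dag_def)
  have fE: "finite E" using d by (meson finite_SigmaI finite_subset)
  have wf: "wf (E\<inverse>)" using finite_acyclic_wf_converse[OF fE d(3)] .
  show ?thesis using v
  proof (induction v rule: wf_induct[OF wf])
    case (1 v)
    show ?case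
    proof (cases "v \<in> leaves V E")
      case True then show ?thesis by blast
    next
      case False
      then obtain w where w: "(v,w)\<in>E" "tree_node E w" using tc 1(2) by (auto simp: tree_child_network_def)
      have "w \<in> V" using w d(2) by auto
      with 1(1) w obtain l where "l\<in>leaves V E" "(w, l) \<in> {(x,y). (x,y)\<in>E \<and> tree_node E y}\<^sup>*" by blast
      moreover have "(v,w) \<in> {(x,y). (x,y)\<in>E \<and> tree_node E y}" using w by auto
      ultimately show ?thesis by (meson converse_rtrancl_into_rtrancl)
    qed
  qed
qed

lemma back_walk:
  assumes tc: "tree_child_network V E S"
    and "(v, x) \<in> {(x,y). (x,y)\<in>E \<and> tree_node E y}\<^sup>*"
    and "(u, x) \<in> E\<^sup>*"
  shows "(u, v) \<in> E\<^sup>* \<or> (v, u) \<in> E\<^sup>+"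
  using assms(2)
proof (induction rule: converse_rtrancl_induct)
  case base then show ?case using assms(3) by blast
next
  case (step v w)
  have vw: "(v,w)\<in>E" "tree_node E w" using step(1) by auto
  from step(3) show ?case
  proof
    assume "(w,u)\<in>E\<^sup>+" then show ?thesis using vw by (meson trancl_into_trancl2)
  next
    assume uw: "(u,w)\<in>E\<^sup>*"
    show ?thesis
    proof (cases "u = w")
      case True then show ?thesis using vw by blast
    next
      case False
      then have "(u,w)\<in>E\<^sup>+" using uw by (meson rtranclD)
      then obtain p where p: "(u,p)\<in>E\<^sup>*" "(p,w)\<in>E" by (meson tranclD2)
      have sub: "E \<subseteq> V \<times> V" "finite V" using tc by (auto simp: tree_child_network_def dag_def)
      have fin: "finite {a. (a,w)\<in>E}" by (rule finite_subset[OF _ sub(2)]) (use sub(1) in auto)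
      have "card {a. (a,w)\<in>E} \<le> Suc 0" using vw(2) by (simp add: tree_node_def indeg_def)
      then have "p = v" using card_le_Suc0_iff_eq[OF fin] p(2) vw(1) by blast
      then show ?thesis using p by blast
    qed
  qed
qed

theorem lemma6:
  fixes V :: "'a set" and E :: "('a \<times> 'a) set" and S :: "'b set"
  assumes "tree_child_network V E S"
    and "no_parents_path V E"
    and "u \<in> V" and "v \<in> V"
    and "C V E u \<noteq> C V E v"
  shows "(u, v) \<in> E\<^sup>+ \<longleftrightarrow> C V E v \<subset> C V E u"
proof
  assume "(u, v) \<in> E\<^sup>+"
  then have "C V E v \<subseteq> C V E u" unfolding C_def by (auto dest: trancl_into_rtrancl)
  then show "C V E v \<subset> C V E u" using assms(5) by blast
next
  assume sub: "C V E v \<subset> C V E u"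
  obtain l where l: "l\<in>leaves V E" "(v, l) \<in> {(x,y). (x,y)\<in>E \<and> tree_node E y}\<^sup>*"
    using tree_leaf[OF assms(1,4)] by blast
  have "(v,l) \<in> E\<^sup>*" using l(2) rtrancl_mono[of "{(x,y). (x,y)\<in>E \<and> tree_node E y}" E] by blast
  then have "l \<in> C V E v" using l(1) by (simp add: C_def)
  then have "(u,l)\<in>E\<^sup>*" using sub by (auto simp: C_def)
  from back_walk[OF assms(1) l(2) this] show "(u, v) \<in> E\<^sup>+"
  proof
    assume "(v,u)\<in>E\<^sup>+"
    then have "C V E u \<subseteq> C V E v" unfolding C_def by (auto dest: trancl_into_rtrancl)
    then show ?thesis using sub by blast
  next
    assume "(u,v)\<in>E\<^sup>*"
    moreover have "u \<noteq> v" using assms(5) by blast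
    ultimately show ?thesis by (meson rtranclD)
  qed
qed

end
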